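(* Let $N_1,N_2\ge1$, let $C_k=\{(\xi_j)_{1\le j\le N_k}\in[0,1]^{N_k}:\sum_j\xi_j=1\}$ for $k=1,2$, and let $L$ be a nonzero real $N_1\times N_2$ matrix such that there exist $z_1\in C_1$, $z_2\in C_2$ with $-Lz_2\in N_{C_1}z_1$ and $L^\top z_1\in N_{C_2}z_2$. Let $\varepsilon\in]0,1/(\|L\|+1)[$ and let $(\gamma_n)_{n\in\mathbb N}$ be a sequence in $[\varepsilon,(1-\varepsilon)/\|L\|]$. Let $x_{1,0}\in\mathbb R^{N_1}$, $x_{2,0}\in\mathbb R^{N_2}$, and for every $n$ set $y_{1,n}=x_{1,n}-\gamma_nLx_{2,n}$, $y_{2,n}=x_{2,n}+\gamma_nL^\top x_{1,n}$, $p_{1,n}=P_{C_1}y_{1,n}$, $p_{2,n}=P_{C_2}y_{2,n}$, $q_{1,n}=p_{1,n}-\gamma_nLp_{2,n}$, $q_{2,n}=p_{2,n}+\gamma_nL^\top p_{1,n}$, $x_{1,n+1}=x_{1,n}-y_{1,n}+q_{1,n}$, $x_{2,n+1}=x_{2,n}-y_{2,n}+q_{2,n}$. Then $x_{1,n}\to\overline x_1$ and $x_{2,n}\to\overline x_2$, where $\overline x_1\in\operatorname{Argmin}_{x\in C_1}x^\top L\overline x_2$ and $\overline x_2\in\operatorname{Argmax}_{x\in C_2}\overline x_1^\top Lx$.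
   Context: $\|L\|$ is the operator norm of $L$ (Euclidean norms). For a nonempty closed convex set $C$, $P_C$ is the Euclidean projection onto $C$ and $N_Cx=\{u:\langle y-x,u\rangle\le0\ \forall y\in C\}$ for $x\in C$ (empty otherwise) is the normal cone. *)

theory Defs
  imports "HOL-Analysis.Analysis"
begin

definition prob_simplex :: "(real ^ 'n::finite) set" where
  "prob_simplex = {v. (\<forall>j. 0 \<le> v $ j \<and> v $ j \<le> 1) \<and> (\<Sum>j\<in>UNIV. v $ j) = 1}"

definition normal_cone :: "'a::real_inner set \<Rightarrow> 'a \<Rightarrow> 'a set" where
  "normal_cone C x = (if x \<in> C then {u. \<forall>y\<in>C. inner (y - x) u \<le> 0} else {})"


definition argmin_on :: "'a set \<Rightarrow> ('a \<Rightarrow> real) \<Rightarrow> 'a set" where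
  "argmin_on C f = {x \<in> C. \<forall>y\<in>C. f x \<le> f y}"

definition argmax_on :: "'a set \<Rightarrow> ('a \<Rightarrow> real) \<Rightarrow> 'a set" where
  "argmax_on C f = {x \<in> C. \<forall>y\<in>C. f y \<le> f x}"

end

theory Submission imports Defs begin


lemma tseng_step:
  fixes B :: "'h::real_inner \<Rightarrow> 'h"
  assumes lin: "linear B" and skew: "\<And>w. inner (B w) w = 0"
    and bnd: "\<And>w. norm (B w) \<le> \<beta> * norm w" and b0: "0 \<le> \<beta>"
    and proj: "inner (x - \<gamma> *\<^sub>R B x - p) (z - p) \<le> 0"
    and sol: "inner (B z) (p - z) \<ge> 0" and g0: "0 \<le> \<gamma>"
  shows "norm (p - \<gamma> *\<^sub>R B (p - x) - z)^2 \<le> norm (x - z)^2 - (1 - \<gamma>^2 * \<beta>^2) * norm (p - x)^2"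
proof -
  define w where "w = p - x"
  define e where "e = p - z"
  have Bw: "B w = B p - B x" unfolding w_def using lin by (simp add: linear_diff)
  have Be: "B e = B p - B z" unfolding e_def using lin by (simp add: linear_diff)
  have 1: "norm (p - \<gamma> *\<^sub>R B (p - x) - z)^2 = norm e ^2 - 2*\<gamma>*inner (B w) e + \<gamma>^2 * norm (B w)^2"
  proof -
    have "p - \<gamma> *\<^sub>R B (p - x) - z = e - \<gamma> *\<^sub>R B w" by (simp add: e_def w_def)
    then have "norm (p - \<gamma> *\<^sub>R B (p - x) - z)^2 = inner (e - \<gamma> *\<^sub>R B w) (e - \<gamma> *\<^sub>R B w)"
      by (simp add: power2_norm_eq_inner)
    also have "\<dots> = inner e e - 2*\<gamma>*inner (B w) e + \<gamma>^2 * inner (B w) (B w)"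
      by (simp add: inner_diff_left inner_diff_right inner_commute algebra_simps power2_eq_square)
    finally show ?thesis by (simp add: power2_norm_eq_inner)
  qed
  have 2: "norm e^2 = norm (x - z)^2 + 2 * inner w e - norm w ^2"
    unfolding w_def e_def by (simp add: power2_norm_eq_inner inner_simps algebra_simps inner_commute)
  have 3: "inner w e + \<gamma> * inner (B x) e \<le> 0"
    using proj unfolding w_def e_def by (simp add: inner_simps algebra_simps)
  have 4: "inner (B p) e \<ge> 0"
  proof -
    have "inner (B p) e = inner (B e) e + inner (B z) e" using Be by (simp add: inner_simps)
    then show ?thesis using skew[of e] sol e_def by simp
  qed
  have 5: "norm (B w)^2 \<le> \<beta>^2 * norm w^2"
    using bnd[of w] by (metis norm_ge_zero power_mono power_mult_distrib)
  have 6: "inner (B w) e = inner (B p) e - inner (B x) e" using Bw by (simp add: inner_simps)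
  have "\<gamma>^2 * norm (B w)^2 \<le> \<gamma>^2 * (\<beta>^2 * norm w^2)" using 5 by (simp add: mult_left_mono)
  moreover have "\<gamma> * inner (B p) e \<ge> 0" using 4 g0 by simp
  ultimately show ?thesis using 1 2 3 6 unfolding w_def[symmetric]
    by (simp add: algebra_simps) 
qed

lemma closed_prob_simplex: "closed (prob_simplex :: (real ^ 'n::finite) set)"
proof -
  have "prob_simplex = (\<Inter>j. {v::real^'n. 0 \<le> v $ j} \<inter> {v. v $ j \<le> 1}) \<inter> {v. (\<Sum>j\<in>UNIV. v $ j) = 1}"
    unfolding prob_simplex_def by auto
  moreover have "closed \<dots>"
    by (intro closed_Int closed_INT ballI closed_Collect_le closed_Collect_eq continuous_intros)
  ultimately show ?thesis by simp
qed

lemma convex_prob_simplex: "convex (prob_simplex :: (real ^ 'n::finite) set)"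
proof (rule convexI)
  fix x y :: "real^'n" and u v :: real
  assume xs: "x \<in> prob_simplex" and ys: "y \<in> prob_simplex" and "0 \<le> u" "0 \<le> v" "u + v = 1"
  then have uv: "0 \<le> u \<and> 0 \<le> v \<and> u + v = 1" by simp
  have x: "\<forall>j. 0 \<le> x $ j \<and> x $ j \<le> 1" "(\<Sum>j\<in>UNIV. x $ j) = 1" using xs by (auto simp: prob_simplex_def)
  have y: "\<forall>j. 0 \<le> y $ j \<and> y $ j \<le> 1" "(\<Sum>j\<in>UNIV. y $ j) = 1" using ys by (auto simp: prob_simplex_def)
  have c: "\<forall>j. 0 \<le> u * x $ j + v * y $ j \<and> u * x $ j + v * y $ j \<le> 1"
  proof
    fix j
    have "u * x $ j \<le> u" "v * y $ j \<le> v" using x y uv by (simp_all add: mult_left_le)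
    then show "0 \<le> u * x $ j + v * y $ j \<and> u * x $ j + v * y $ j \<le> 1" using uv x y by simp
  qed
  have "(\<Sum>j\<in>UNIV. u * x $ j + v * y $ j) = 1"
    using x y uv by (simp add: sum.distrib sum_distrib_left[symmetric])
  then show "u *\<^sub>R x + v *\<^sub>R y \<in> prob_simplex" using c by (simp add: prob_simplex_def)
qed

lemma adj_mat: "inner (L *v b) a = inner b (transpose L *v (a::real^'m::finite))"
  for L :: "real^'n::finite^'m"
  by (metis dot_lmul_matrix inner_commute transpose_matrix_vector)

lemma norm_transpose_le:
  fixes L :: "real^'n::finite^'m::finite"
  shows "norm (transpose L *v a) \<le> onorm ((*v) L) * norm a"
proof -
  define t where "t = transpose L *v a"
  have "norm t ^2 = inner (L *v t) a" by (simp add: adj_mat t_def power2_norm_eq_inner)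
  also have "\<dots> \<le> norm (L *v t) * norm a" by (rule Cauchy_Schwarz_ineq2[THEN abs_le_D1])
  also have "\<dots> \<le> onorm ((*v) L) * norm t * norm a"
    by (intro mult_right_mono onorm) auto
  finally have "norm t * norm t \<le> (onorm ((*v) L) * norm a) * norm t"
    by (simp add: power2_eq_square algebra_simps)
  then show ?thesis unfolding t_def[symmetric]
    by (cases "t = 0") (auto simp: onorm_pos_le)
qed

theorem mainTheorem6:
  fixes L :: "real ^ 'n2::finite ^ 'n1::finite"
    and \<epsilon> :: real and \<gamma> :: "nat \<Rightarrow> real"
    and x1 y1 p1 q1 :: "nat \<Rightarrow> real ^ 'n1"
    and x2 y2 p2 q2 :: "nat \<Rightarrow> real ^ 'n2"
  assumes L_nz: "L \<noteq> 0"
    and sol: "\<exists>z1 z2. z1 \<in> (prob_simplex :: (real^'n1) set) \<and> z2 \<in> (prob_simplex :: (real^'n2) set)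
               \<and> - (L *v z2) \<in> normal_cone prob_simplex z1
               \<and> transpose L *v z1 \<in> normal_cone prob_simplex z2"
    and eps: "0 < \<epsilon>" "\<epsilon> < 1 / (onorm ((*v) L) + 1)"
    and gam: "\<And>n. \<epsilon> \<le> \<gamma> n \<and> \<gamma> n \<le> (1 - \<epsilon>) / onorm ((*v) L)"
    and y1: "\<And>n. y1 n = x1 n - \<gamma> n *\<^sub>R (L *v x2 n)"
    and y2: "\<And>n. y2 n = x2 n + \<gamma> n *\<^sub>R (transpose L *v x1 n)"
    and p1: "\<And>n. p1 n = closest_point prob_simplex (y1 n)"
    and p2: "\<And>n. p2 n = closest_point prob_simplex (y2 n)"
    and q1: "\<And>n. q1 n = p1 n - \<gamma> n *\<^sub>R (L *v p2 n)"
    and q2: "\<And>n. q2 n = p2 n + \<gamma> n *\<^sub>R (transpose L *v p1 n)"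
    and x1s: "\<And>n. x1 (Suc n) = x1 n - y1 n + q1 n"
    and x2s: "\<And>n. x2 (Suc n) = x2 n - y2 n + q2 n"
  shows "\<exists>xb1 xb2. x1 \<longlonglongrightarrow> xb1 \<and> x2 \<longlonglongrightarrow> xb2
           \<and> xb1 \<in> argmin_on prob_simplex (\<lambda>x. x \<bullet> (L *v xb2))
           \<and> xb2 \<in> argmax_on prob_simplex (\<lambda>x. xb1 \<bullet> (L *v x))"
proof -
  define \<beta> where "\<beta> = onorm ((*v) L)"
  define C where "C = (prob_simplex :: (real^'n1) set) \<times> (prob_simplex :: (real^'n2) set)"
  define B where "B = (\<lambda>u::(real^'n1) \<times> (real^'n2). (L *v snd u, - (transpose L *v fst u)))"
  define X where "X = (\<lambda>n. (x1 n, x2 n))"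
  define P where "P = (\<lambda>n. (p1 n, p2 n))"
  define Sol where "Sol = (\<lambda>Z. Z \<in> C \<and> (\<forall>c\<in>C. inner (B Z) (c - Z) \<ge> 0))"
  have b0: "0 \<le> \<beta>" unfolding \<beta>_def by (simp add: onorm_pos_le)
  have bpos: "0 < \<beta>"
  proof (rule ccontr)
    assume "\<not> 0 < \<beta>"
    then have "\<beta> = 0" using b0 by simp
    then show False using gam[of 0] eps(1) unfolding \<beta>_def by simp
  qed
  have eps1: "\<epsilon> < 1"
  proof -
    have "1 / (\<beta> + 1) \<le> 1" using b0 by simp
    then show ?thesis using eps(2) unfolding \<beta>_def by simp
  qed
  have gb: "0 \<le> \<gamma> n * \<beta> \<and> \<gamma> n * \<beta> \<le> 1 - \<epsilon>" for n
    using gam[of n] bpos eps(1) by (simp add: \<beta>_def[symmetric] pos_le_divide_eq)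
  have coef: "\<epsilon> \<le> 1 - (\<gamma> n)^2 * \<beta>^2" for n
  proof -
    have "(\<gamma> n * \<beta>)^2 \<le> (1 - \<epsilon>)^2" using gb[of n] by (intro power_mono) auto
    then have "(\<gamma> n)^2 * \<beta>^2 \<le> (1 - \<epsilon>)^2" by (simp add: power_mult_distrib)
    moreover have "\<epsilon> \<le> 1 - (1 - \<epsilon>)^2" using eps(1) eps1 by (simp add: power2_eq_square algebra_simps)
    ultimately show ?thesis by simp
  qed
  have blB: "bounded_linear B" unfolding B_def
    by (intro bounded_linear_Pair bounded_linear_minus bounded_linear_compose[OF matrix_vector_mul_bounded_linear]
        bounded_linear_fst bounded_linear_snd)
  then have linB: "linear B" by (rule bounded_linear.linear)
  have skew: "inner (B w) w = 0" for w
  proof -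
    obtain a b where w: "w = (a, b)" by (cases w)
    have e1: "inner (B w) w = inner (L *v b) a - inner (transpose L *v a) b"
      unfolding B_def w by (simp del: transpose_matrix_vector)
    have e2: "inner (L *v b) a = inner b (transpose L *v a)" by (rule adj_mat)
    have e3: "inner b (transpose L *v a) = inner (transpose L *v a) b" by (rule inner_commute)
    show ?thesis using e1 e2 e3 by linarith
  qed
  have bndB: "norm (B w) \<le> \<beta> * norm w" for w
  proof -
    obtain a b where w: "w = (a, b)" by (cases w)
    have 1: "norm (L *v b) \<le> \<beta> * norm b" unfolding \<beta>_def by (rule onorm) simp
    have 2: "norm (transpose L *v a) \<le> \<beta> * norm a" unfolding \<beta>_def by (rule norm_transpose_le)
    have 3: "norm (L *v b)^2 \<le> \<beta>^2 * norm b^2" using 1 norm_ge_zero[of "L *v b"]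
      by (metis power_mono power_mult_distrib)
    have 4: "norm (transpose L *v a)^2 \<le> \<beta>^2 * norm a^2" using 2 norm_ge_zero[of "transpose L *v a"]
      by (metis power_mono power_mult_distrib)
    have 5: "norm (B w)^2 = norm (L *v b)^2 + norm (- (transpose L *v a))^2"
      unfolding B_def w fst_conv snd_conv norm_Pair by simp
    have 6: "(\<beta> * norm w)^2 = \<beta>^2 * norm a^2 + \<beta>^2 * norm b^2"
      unfolding w norm_Pair power_mult_distrib by (simp add: distrib_left)
    have "norm (B w)^2 \<le> (\<beta> * norm w)^2" using 3 4 5 6 unfolding norm_minus_cancel by linarith
    then show ?thesis by (rule power2_le_imp_le) (simp add: b0)
  qed
  have convC: "convex C" unfolding C_def by (intro convex_Times convex_prob_simplex)
  have closedC: "closed C" unfolding C_def by (intro closed_Times closed_prob_simplex)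
  have PC: "P n \<in> C" for n
  proof -
    have ne1: "(prob_simplex :: (real^'n1) set) \<noteq> {}" and ne2: "(prob_simplex :: (real^'n2) set) \<noteq> {}"
      using sol by auto
    show ?thesis unfolding P_def C_def p1 p2
      using closest_point_in_set[OF closed_prob_simplex ne1] closest_point_in_set[OF closed_prob_simplex ne2]
      by auto
  qed
  have proj: "inner (X n - \<gamma> n *\<^sub>R B (X n) - P n) (c - P n) \<le> 0" if "c \<in> C" for n c
  proof -
    obtain c1 c2 where c0: "c = (c1, c2)" by (cases c)
    have c: "c = (c1, c2)" "c1 \<in> prob_simplex" "c2 \<in> prob_simplex"
      using that unfolding C_def c0 by auto
    have "X n - \<gamma> n *\<^sub>R B (X n) = (y1 n, y2 n)" unfolding X_def B_def y1 y2 by simp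
    moreover have "inner (y1 n - p1 n) (c1 - p1 n) \<le> 0" unfolding p1
      by (rule closest_point_dot[OF convex_prob_simplex closed_prob_simplex c(2)])
    moreover have "inner (y2 n - p2 n) (c2 - p2 n) \<le> 0" unfolding p2
      by (rule closest_point_dot[OF convex_prob_simplex closed_prob_simplex c(3)])
    ultimately show ?thesis unfolding P_def c by simp
  qed
  have Xs: "X (Suc n) = P n - \<gamma> n *\<^sub>R B (P n - X n)" for n
    unfolding X_def P_def B_def using x1s[of n] x2s[of n] y1[of n] y2[of n] q1[of n] q2[of n]
    by (simp add: algebra_simps)
  have fejer: "norm (X (Suc n) - Z)^2 \<le> norm (X n - Z)^2 - \<epsilon> * norm (P n - X n)^2" if "Sol Z" for Z n
  proof -
    have sZ: "inner (B Z) (P n - Z) \<ge> 0" using that PC[of n] unfolding Sol_def by blast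
    have "norm (X (Suc n) - Z)^2 \<le> norm (X n - Z)^2 - (1 - (\<gamma> n)^2 * \<beta>^2) * norm (P n - X n)^2"
      unfolding Xs using tseng_step[OF linB skew bndB b0 proj sZ] that gam[of n] eps(1)
      unfolding Sol_def by fastforce
    moreover have "\<epsilon> * norm (P n - X n)^2 \<le> (1 - (\<gamma> n)^2 * \<beta>^2) * norm (P n - X n)^2"
      using coef[of n] by (intro mult_right_mono) auto
    ultimately show ?thesis by linarith
  qed
  obtain z1 z2 where z: "z1 \<in> (prob_simplex :: (real^'n1) set)" "z2 \<in> (prob_simplex :: (real^'n2) set)"
    "- (L *v z2) \<in> normal_cone prob_simplex z1" "transpose L *v z1 \<in> normal_cone prob_simplex z2"
    using sol by blast
  define Z0 where "Z0 = (z1, z2)"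
  have solZ0: "Sol Z0"
    unfolding Sol_def
  proof (intro conjI ballI)
    show "Z0 \<in> C" using z unfolding Z0_def C_def by simp
    fix c assume "c \<in> C"
    then obtain c1 c2 where c: "c = (c1, c2)" "c1 \<in> prob_simplex" "c2 \<in> prob_simplex"
      unfolding C_def by auto
    have "inner (c1 - z1) (- (L *v z2)) \<le> 0" using z(1,3) c(2) unfolding normal_cone_def by auto
    moreover have "inner (c2 - z2) (transpose L *v z1) \<le> 0" using z(2,4) c(3) unfolding normal_cone_def by auto
    ultimately show "inner (B Z0) (c - Z0) \<ge> 0"
      unfolding B_def Z0_def c by (simp add: inner_commute)
  qed
  have dec: "norm (X n - Z) \<le> norm (X m - Z)" if "Sol Z" "m \<le> n" for Z m n
  proof -
    have "decseq (\<lambda>n. norm (X n - Z))"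
    proof (rule decseq_SucI)
      fix n
      have "norm (X (Suc n) - Z)^2 \<le> norm (X n - Z)^2"
        using fejer[OF that(1), of n] eps(1) by (smt (verit) mult_nonneg_nonneg zero_le_power2)
      then show "norm (X (Suc n) - Z) \<le> norm (X n - Z)" by (rule power2_le_imp_le) simp
    qed
    then show ?thesis using that(2) by (simp add: decseq_def)
  qed
  have tele: "\<epsilon> * (\<Sum>k<n. norm (P k - X k)^2) \<le> norm (X 0 - Z0)^2 - norm (X n - Z0)^2" for n
  proof (induction n)
    case 0 then show ?case by simp
  next
    case (Suc n)
    then show ?case using fejer[OF solZ0, of n] by (simp add: algebra_simps)
  qed
  have summ: "summable (\<lambda>k. norm (P k - X k)^2)"
  proof (rule summableI_nonneg_bounded)
    fix n
    have "\<epsilon> * (\<Sum>k<n. norm (P k - X k)^2) \<le> \<epsilon> * (norm (X 0 - Z0)^2 / \<epsilon>)"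
    proof -
      have "\<epsilon> * (norm (X 0 - Z0)^2 / \<epsilon>) = norm (X 0 - Z0)^2" using eps(1) by simp
      moreover have "0 \<le> norm (X n - Z0)^2" by simp
      ultimately show ?thesis using tele[of n] by linarith
    qed
    then show "(\<Sum>k<n. norm (P k - X k)^2) \<le> norm (X 0 - Z0)^2 / \<epsilon>"
      using eps(1) by (simp only: mult_le_cancel_left_pos)
  qed simp
  have "(\<lambda>k. norm (P k - X k)^2) \<longlonglongrightarrow> 0" by (rule summable_LIMSEQ_zero[OF summ])
  then have "(\<lambda>k. sqrt (norm (P k - X k)^2)) \<longlonglongrightarrow> sqrt 0" by (rule tendsto_real_sqrt)
  then have "(\<lambda>k. norm (P k - X k)) \<longlonglongrightarrow> 0" by simp
  then have PX0: "(\<lambda>k. P k - X k) \<longlonglongrightarrow> 0" by (simp add: tendsto_norm_zero_iff)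
  have bX: "bounded (range X)"
  proof -
    have "range X \<subseteq> cball Z0 (norm (X 0 - Z0))"
      using dec[OF solZ0] by (auto simp: dist_norm norm_minus_commute)
    then show ?thesis using bounded_cball bounded_subset by blast
  qed
  have bG: "bounded (range \<gamma>)"
    unfolding bounded_real using gam eps(1) by (metis abs_of_nonneg order_trans less_le rangeE)
  have "bounded (range (\<lambda>n. (X n, \<gamma> n)))"
    by (rule bounded_subset[OF bounded_Times[OF bX bG]]) auto
  then obtain lg r where r: "strict_mono r" "((\<lambda>n. (X n, \<gamma> n)) \<circ> r) \<longlonglongrightarrow> lg"
    using bounded_imp_convergent_subsequence by blast
  define l where "l = fst lg"
  define g where "g = snd lg"
  have Xr: "(\<lambda>n. X (r n)) \<longlonglongrightarrow> l" using tendsto_fst[OF r(2)] unfolding l_def by (simp add: o_def)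
  have Gr: "(\<lambda>n. \<gamma> (r n)) \<longlonglongrightarrow> g" using tendsto_snd[OF r(2)] unfolding g_def by (simp add: o_def)
  have gpos: "\<epsilon> \<le> g" by (rule LIMSEQ_le_const[OF Gr]) (use gam in auto)
  have PXr: "(\<lambda>n. P (r n) - X (r n)) \<longlonglongrightarrow> 0" using LIMSEQ_subseq_LIMSEQ[OF PX0 r(1)] by (simp add: o_def)
  have Pr: "(\<lambda>n. P (r n)) \<longlonglongrightarrow> l" using tendsto_add[OF PXr Xr] by simp
  have lC: "l \<in> C" using Lim_in_closed_set[OF closedC _ _ Pr] PC by auto
  have solL: "Sol l"
    unfolding Sol_def
  proof (intro conjI ballI lC)
    fix c assume c: "c \<in> C"
    have BXr: "(\<lambda>n. B (X (r n))) \<longlonglongrightarrow> B l" by (rule bounded_linear.tendsto[OF blB Xr])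
    have "(\<lambda>n. inner (X (r n) - \<gamma> (r n) *\<^sub>R B (X (r n)) - P (r n)) (c - P (r n)))
            \<longlonglongrightarrow> inner (l - g *\<^sub>R B l - l) (c - l)"
      by (intro tendsto_intros Xr Pr Gr BXr)
    then have "inner (l - g *\<^sub>R B l - l) (c - l) \<le> 0"
      by (rule LIMSEQ_le_const2) (use proj[OF c] in auto)
    then have "g * inner (B l) (c - l) \<ge> 0" by simp
    then show "inner (B l) (c - l) \<ge> 0" using gpos eps(1) by (simp add: zero_le_mult_iff)
  qed
  have Xl: "X \<longlonglongrightarrow> l"
    unfolding LIMSEQ_iff
  proof (intro allI impI)
    fix e :: real assume e: "0 < e"
    obtain N where N: "\<forall>n\<ge>N. norm (X (r n) - l) < e" using Xr e unfolding LIMSEQ_iff by blast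
    show "\<exists>no. \<forall>n\<ge>no. norm (X n - l) < e"
    proof (intro exI allI impI)
      fix n assume "r N \<le> n"
      then show "norm (X n - l) < e" using dec[OF solL] N by (meson le_less_trans order_refl)
    qed
  qed
  obtain xb1 xb2 where l: "l = (xb1, xb2)" by (cases l)
  have c1: "x1 \<longlonglongrightarrow> xb1" using tendsto_fst[OF Xl] unfolding X_def l by simp
  have c2: "x2 \<longlonglongrightarrow> xb2" using tendsto_snd[OF Xl] unfolding X_def l by simp
  have xin: "xb1 \<in> prob_simplex" "xb2 \<in> prob_simplex" using lC unfolding l C_def by auto
  have am: "xb1 \<in> argmin_on prob_simplex (\<lambda>x. x \<bullet> (L *v xb2))"
    unfolding argmin_on_def
  proof (intro CollectI conjI ballI xin)
    fix y assume y: "y \<in> (prob_simplex :: (real^'n1) set)"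
    then have "(y, xb2) \<in> C" using xin unfolding C_def by simp
    then have "inner (B l) ((y, xb2) - l) \<ge> 0" using solL unfolding Sol_def by blast
    then show "xb1 \<bullet> (L *v xb2) \<le> y \<bullet> (L *v xb2)" unfolding B_def l by (simp add: inner_commute inner_diff_right)
  qed
  have aM: "xb2 \<in> argmax_on prob_simplex (\<lambda>x. xb1 \<bullet> (L *v x))"
    unfolding argmax_on_def
  proof (intro CollectI conjI ballI xin)
    fix y assume y: "y \<in> (prob_simplex :: (real^'n2) set)"
    then have "(xb1, y) \<in> C" using xin unfolding C_def by simp
    then have "inner (B l) ((xb1, y) - l) \<ge> 0" using solL unfolding Sol_def by blast
    then show "xb1 \<bullet> (L *v y) \<le> xb1 \<bullet> (L *v xb2)" unfolding B_def l
      by (simp add: inner_diff_right inner_diff_left) (metis dot_lmul_matrix inner_commute)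
  qed
  show ?thesis using c1 c2 am aM by blast
qed

end
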